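(* Let $G_i=(V_i,E_i)$ be a simple graph of maximum degree $\Delta_i$ and minimum degree $\delta_i$, $i\in\{1,2\}$, and let $S\subseteq V_1\times V_2$. Then: (i) If for some $i\in\{1,2\}$ and integer $k_i$, $P_{V_i}(S)$ is a $k_i$-paf set in $G_i$, then for every integer $k\in\{k_i+\Delta_j,\dots,\Delta_i+\Delta_j-2\}$, $S$ is a $k$-paf set in $G_1\times G_2$, where $j\in\{1,2\}$, $j\neq i$. (ii) If for integers $k_1,k_2$, $P_{V_1}(S)$ is a $k_1$-paf set in $G_1$ and $P_{V_2}(S)$ is a $k_2$-paf set in $G_2$, then for every integer $k\in\{k',\dots,\Delta_1+\Delta_2-2\}$, $S$ is a $k$-paf set in $G_1\times G_2$, where $k'=\max\{k_1+k_2-1,\;\min\{k_2-\delta_1,\,k_1-\delta_2\}\}$.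
   Context: All graphs are finite and simple. For a graph $G=(V,E)$, a set $S\subseteq V$ and $v\in V$, let $\delta_S(v)=|\{u\in S: uv\in E\}|$, $\overline{S}=V\setminus S$, and let $\partial S$ be the set of vertices of $\overline S$ adjacent to at least one vertex of $S$. For an integer $k$, a non-empty set $S\subseteq V$ is a defensive $k$-alliance if $\delta_S(v)\ge \delta_{\overline S}(v)+k$ for every $v\in S$; an offensive $k$-alliance if $\delta_S(v)\ge \delta_{\overline S}(v)+k$ for every $v\in\partial S$; and a powerful $k$-alliance if it is both a defensive $k$-alliance and an offensive $(k+2)$-alliance. A set $X\subseteq V$ is a powerful $k$-alliance free set ($k$-paf set) if no powerful $k$-alliance $S$ satisfies $S\subseteq X$. The Cartesian product $G_1\times G_2$ of $G_1=(V_1,E_1)$, $G_2=(V_2,E_2)$ has vertex set $V_1\times V_2$, with $(a,b)$ adjacent to $(c,d)$ iff either $a=c$ and $bd\in E_2$, or $b=d$ and $ac\in E_1$. For $A\subseteq V_1\times V_2$, $P_{V_i}(A)$ denotes the projection of $A$ onto $V_i$. *)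

theory Defs
  imports Main
begin

definition simple_graph :: "'a set \<Rightarrow> ('a \<Rightarrow> 'a \<Rightarrow> bool) \<Rightarrow> bool" where
  "simple_graph V E \<longleftrightarrow> finite V \<and> (\<forall>u v. E u v \<longrightarrow> u \<in> V \<and> v \<in> V)
     \<and> (\<forall>u v. E u v \<longrightarrow> E v u) \<and> (\<forall>v. \<not> E v v)"

definition degree :: "'a set \<Rightarrow> ('a \<Rightarrow> 'a \<Rightarrow> bool) \<Rightarrow> 'a \<Rightarrow> nat" where
  "degree V E v = card {u \<in> V. E v u}"

definition maxdeg :: "'a set \<Rightarrow> ('a \<Rightarrow> 'a \<Rightarrow> bool) \<Rightarrow> int" where
  "maxdeg V E = int (Max (degree V E ` V))"

definition mindeg :: "'a set \<Rightarrow> ('a \<Rightarrow> 'a \<Rightarrow> bool) \<Rightarrow> int" where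
  "mindeg V E = int (Min (degree V E ` V))"

definition dlt :: "('a \<Rightarrow> 'a \<Rightarrow> bool) \<Rightarrow> 'a set \<Rightarrow> 'a \<Rightarrow> int" where
  "dlt E S v = int (card {u \<in> S. E u v})"

definition boundary :: "'a set \<Rightarrow> ('a \<Rightarrow> 'a \<Rightarrow> bool) \<Rightarrow> 'a set \<Rightarrow> 'a set" where
  "boundary V E S = {v \<in> V - S. \<exists>u \<in> S. E u v}"

definition defensive_alliance :: "'a set \<Rightarrow> ('a \<Rightarrow> 'a \<Rightarrow> bool) \<Rightarrow> int \<Rightarrow> 'a set \<Rightarrow> bool" where
  "defensive_alliance V E k S \<longleftrightarrow> S \<noteq> {} \<and> S \<subseteq> V \<and>
     (\<forall>v \<in> S. dlt E S v \<ge> dlt E (V - S) v + k)"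

definition offensive_alliance :: "'a set \<Rightarrow> ('a \<Rightarrow> 'a \<Rightarrow> bool) \<Rightarrow> int \<Rightarrow> 'a set \<Rightarrow> bool" where
  "offensive_alliance V E k S \<longleftrightarrow> S \<noteq> {} \<and> S \<subseteq> V \<and>
     (\<forall>v \<in> boundary V E S. dlt E S v \<ge> dlt E (V - S) v + k)"

definition powerful_alliance :: "'a set \<Rightarrow> ('a \<Rightarrow> 'a \<Rightarrow> bool) \<Rightarrow> int \<Rightarrow> 'a set \<Rightarrow> bool" where
  "powerful_alliance V E k S \<longleftrightarrow> defensive_alliance V E k S \<and> offensive_alliance V E (k + 2) S"

definition paf_set :: "'a set \<Rightarrow> ('a \<Rightarrow> 'a \<Rightarrow> bool) \<Rightarrow> int \<Rightarrow> 'a set \<Rightarrow> bool" where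
  "paf_set V E k X \<longleftrightarrow> X \<subseteq> V \<and> (\<forall>S. powerful_alliance V E k S \<longrightarrow> \<not> S \<subseteq> X)"

definition cart_adj :: "('a \<Rightarrow> 'a \<Rightarrow> bool) \<Rightarrow> ('b \<Rightarrow> 'b \<Rightarrow> bool) \<Rightarrow> 'a \<times> 'b \<Rightarrow> 'a \<times> 'b \<Rightarrow> bool" where
  "cart_adj E1 E2 x y \<longleftrightarrow> (fst x = fst y \<and> E2 (snd x) (snd y)) \<or> (snd x = snd y \<and> E1 (fst x) (fst y))"

end

theory Submission
  imports Defs
begin

definition Dl :: "'a set \<Rightarrow> ('a \<Rightarrow> 'a \<Rightarrow> bool) \<Rightarrow> 'a set \<Rightarrow> 'a \<Rightarrow> int" where
  "Dl V E T v = dlt E T v - dlt E (V - T) v"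

lemma pa_iff:
  "powerful_alliance V E k T \<longleftrightarrow> T \<noteq> {} \<and> T \<subseteq> V \<and> (\<forall>v\<in>T. k \<le> Dl V E T v)
     \<and> (\<forall>v\<in>boundary V E T. k + 2 \<le> Dl V E T v)"
  unfolding powerful_alliance_def defensive_alliance_def offensive_alliance_def Dl_def
  by auto

lemma dlt_mono:
  assumes "simple_graph V E" "T \<subseteq> T'"
  shows "dlt E T v \<le> dlt E T' v"
proof -
  have "{u \<in> T'. E u v} \<subseteq> V" using assms(1) unfolding simple_graph_def by auto
  moreover have "finite V" using assms(1) unfolding simple_graph_def by auto
  ultimately have "finite {u \<in> T'. E u v}" by (rule finite_subset)
  moreover have "{u \<in> T. E u v} \<subseteq> {u \<in> T'. E u v}" using assms(2) by auto
  ultimately show ?thesis unfolding dlt_def by (simp add: card_mono)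
qed

lemma Dl_mono:
  assumes "simple_graph V E" "T \<subseteq> T'"
  shows "Dl V E T v \<le> Dl V E T' v"
proof -
  have "dlt E (V - T') v \<le> dlt E (V - T) v" by (rule dlt_mono[OF assms(1)]) (use assms(2) in auto)
  then show ?thesis using dlt_mono[OF assms, of v] unfolding Dl_def by linarith
qed

lemma dlt_deg:
  assumes "simple_graph V E"
  shows "dlt E T v + dlt E (V - T) v = int (degree V E v)"
proof -
  let ?N = "{u \<in> V. E v u}"
  have f: "finite ?N" using assms unfolding simple_graph_def by auto
  have 1: "{u \<in> T. E u v} = ?N \<inter> T" using assms unfolding simple_graph_def by blast
  have 2: "{u \<in> V - T. E u v} = ?N - T" using assms unfolding simple_graph_def by blast
  show ?thesis unfolding dlt_def degree_def 1 2 using card_Int_Diff[OF f, of T] by simp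
qed

lemma Dl_ge: "simple_graph V E \<Longrightarrow> - int (degree V E v) \<le> Dl V E T v"
  using dlt_deg[of V E T v] unfolding Dl_def dlt_def by linarith

lemma Dl_le: "simple_graph V E \<Longrightarrow> Dl V E T v \<le> int (degree V E v)"
  using dlt_deg[of V E T v] unfolding Dl_def dlt_def by linarith

lemma Dl_empty: "simple_graph V E \<Longrightarrow> Dl V E {} v = - int (degree V E v)"
  using dlt_deg[of V E "{}" v] unfolding Dl_def dlt_def by simp

lemma deg_le_max: "simple_graph V E \<Longrightarrow> v \<in> V \<Longrightarrow> int (degree V E v) \<le> maxdeg V E"
  unfolding maxdeg_def simple_graph_def by simp

lemma min_le_deg: "simple_graph V E \<Longrightarrow> v \<in> V \<Longrightarrow> mindeg V E \<le> int (degree V E v)"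
  unfolding mindeg_def simple_graph_def by simp

lemma dlt_cart:
  assumes G1: "simple_graph V1 E1" and G2: "simple_graph V2 E2"
  shows "dlt (cart_adj E1 E2) B (a, b) = dlt E1 {x. (x, b) \<in> B} a + dlt E2 {y. (a, y) \<in> B} b"
proof -
  let ?P = "{x \<in> {x. (x, b) \<in> B}. E1 x a}"
  let ?Q = "{y \<in> {y. (a, y) \<in> B}. E2 y b}"
  have eq: "{u \<in> B. cart_adj E1 E2 u (a, b)} = (\<lambda>x. (x, b)) ` ?P \<union> (\<lambda>y. (a, y)) ` ?Q"
    unfolding cart_adj_def by auto
  have fP: "finite ?P" using G1 unfolding simple_graph_def
    by (metis (no_types, lifting) mem_Collect_eq rev_finite_subset subsetI)
  have fQ: "finite ?Q" using G2 unfolding simple_graph_def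
    by (metis (no_types, lifting) mem_Collect_eq rev_finite_subset subsetI)
  have disj: "(\<lambda>x. (x, b)) ` ?P \<inter> (\<lambda>y. (a, y)) ` ?Q = {}"
    using G1 unfolding simple_graph_def by auto
  have "card ({u \<in> B. cart_adj E1 E2 u (a, b)}) = card ?P + card ?Q"
    unfolding eq using card_Un_disjoint[OF _ _ disj] fP fQ
    by (simp add: card_image inj_on_def)
  then show ?thesis unfolding dlt_def by simp
qed

lemma Dl_cart:
  assumes G1: "simple_graph V1 E1" and G2: "simple_graph V2 E2"
    and a: "a \<in> V1" and b: "b \<in> V2"
  shows "Dl (V1 \<times> V2) (cart_adj E1 E2) B (a, b) =
     Dl V1 E1 {x. (x, b) \<in> B} a + Dl V2 E2 {y. (a, y) \<in> B} b"
proof -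
  have r: "{x. (x, b) \<in> V1 \<times> V2 - B} = V1 - {x. (x, b) \<in> B}" using b by auto
  have c: "{y. (a, y) \<in> V1 \<times> V2 - B} = V2 - {y. (a, y) \<in> B}" using a by auto
  show ?thesis unfolding Dl_def dlt_cart[OF G1 G2] r c by simp
qed


lemma row_sub: "{x. (x, b) \<in> A} \<subseteq> fst ` A" by (auto, metis fst_conv rev_image_eqI)
lemma col_sub: "{y. (a, y) \<in> A} \<subseteq> snd ` A" by (auto, metis snd_conv rev_image_eqI)
lemma col_empty: "a \<notin> fst ` A \<Longrightarrow> {y. (a, y) \<in> A} = {}" by (auto simp: image_iff)
lemma row_empty: "b \<notin> snd ` A \<Longrightarrow> {x. (x, b) \<in> A} = {}" by (auto simp: image_iff)
lemma ex_col: "a \<in> fst ` A \<Longrightarrow> \<exists>b. (a, b) \<in> A" by auto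
lemma ex_row: "b \<in> snd ` A \<Longrightarrow> \<exists>a. (a, b) \<in> A" by auto

lemma part1:
  assumes G1: "simple_graph V1 E1" and G2: "simple_graph V2 E2"
    and S: "S \<subseteq> V1 \<times> V2"
    and paf: "paf_set V1 E1 k1 (fst ` S)" and kk: "k1 + maxdeg V2 E2 \<le> k"
  shows "paf_set (V1 \<times> V2) (cart_adj E1 E2) k S"
  unfolding paf_set_def
proof (intro conjI allI impI notI)
  show "S \<subseteq> V1 \<times> V2" by (rule S)
  fix A assume pa: "powerful_alliance (V1 \<times> V2) (cart_adj E1 E2) k A" and AS: "A \<subseteq> S"
  from pa[unfolded pa_iff] have ne: "A \<noteq> {}" and AP: "A \<subseteq> V1 \<times> V2"
    and def: "\<forall>v\<in>A. k \<le> Dl (V1 \<times> V2) (cart_adj E1 E2) A v"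
    and off: "\<forall>v\<in>boundary (V1 \<times> V2) (cart_adj E1 E2) A. k + 2 \<le> Dl (V1 \<times> V2) (cart_adj E1 E2) A v"
    by blast+
  let ?X = "fst ` A"
  have m0: "0 \<le> maxdeg V2 E2" unfolding maxdeg_def by simp
  have "powerful_alliance V1 E1 k1 ?X"
    unfolding pa_iff
  proof (intro conjI ballI)
    show "?X \<noteq> {}" using ne by simp
    show "?X \<subseteq> V1" using AP by auto
  next
    fix a assume "a \<in> ?X"
    then have "\<exists>b. (a, b) \<in> A" by (rule ex_col)
    then obtain b where ab: "(a, b) \<in> A" by blast
    then have a: "a \<in> V1" and b: "b \<in> V2" using AP by auto
    have "k \<le> Dl V1 E1 {x. (x, b) \<in> A} a + Dl V2 E2 {y. (a, y) \<in> A} b"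
      using bspec[OF def ab] Dl_cart[OF G1 G2 a b] by simp
    moreover have "Dl V1 E1 {x. (x, b) \<in> A} a \<le> Dl V1 E1 ?X a"
      by (rule Dl_mono[OF G1 row_sub])
    moreover have "Dl V2 E2 {y. (a, y) \<in> A} b \<le> maxdeg V2 E2"
      using Dl_le[OF G2, of "{y. (a, y) \<in> A}" b] deg_le_max[OF G2 b] by linarith
    ultimately show "k1 \<le> Dl V1 E1 ?X a" using kk by linarith
  next
    fix a assume "a \<in> boundary V1 E1 ?X"
    then obtain a' where a: "a \<in> V1" "a \<notin> ?X" and a': "a' \<in> ?X" "E1 a' a"
      unfolding boundary_def by auto
    from a'(1) have "\<exists>b. (a', b) \<in> A" by (rule ex_col)
    then obtain b where a'b: "(a', b) \<in> A" by blast
    then have b: "b \<in> V2" using AP by auto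
    have "(a, b) \<in> boundary (V1 \<times> V2) (cart_adj E1 E2) A"
    proof -
      have "(a, b) \<notin> A" using a(2) by (metis fst_conv rev_image_eqI)
      moreover have "cart_adj E1 E2 (a', b) (a, b)" unfolding cart_adj_def using a'(2) by simp
      ultimately show ?thesis unfolding boundary_def using a(1) b a'b by blast
    qed
    then have "k + 2 \<le> Dl (V1 \<times> V2) (cart_adj E1 E2) A (a, b)" using off by blast
    then have "k + 2 \<le> Dl V1 E1 {x. (x, b) \<in> A} a + Dl V2 E2 {y. (a, y) \<in> A} b"
      using Dl_cart[OF G1 G2 a(1) b, of A] by simp
    moreover have "{y. (a, y) \<in> A} = {}" using col_empty[OF a(2)] .
    moreover have "Dl V1 E1 {x. (x, b) \<in> A} a \<le> Dl V1 E1 ?X a"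
      by (rule Dl_mono[OF G1 row_sub])
    ultimately show "k1 + 2 \<le> Dl V1 E1 ?X a" using kk m0 Dl_empty[OF G2, of b] by simp
  qed
  moreover have "?X \<subseteq> fst ` S" using AS by auto
  ultimately show False using paf unfolding paf_set_def by blast
qed

lemma part2:
  assumes G1: "simple_graph V1 E1" and G2: "simple_graph V2 E2"
    and S: "S \<subseteq> V1 \<times> V2"
    and paf: "paf_set V2 E2 k2 (snd ` S)" and kk: "k2 + maxdeg V1 E1 \<le> k"
  shows "paf_set (V1 \<times> V2) (cart_adj E1 E2) k S"
  unfolding paf_set_def
proof (intro conjI allI impI notI)
  show "S \<subseteq> V1 \<times> V2" by (rule S)
  fix A assume pa: "powerful_alliance (V1 \<times> V2) (cart_adj E1 E2) k A" and AS: "A \<subseteq> S"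
  from pa[unfolded pa_iff] have ne: "A \<noteq> {}" and AP: "A \<subseteq> V1 \<times> V2"
    and def: "\<forall>v\<in>A. k \<le> Dl (V1 \<times> V2) (cart_adj E1 E2) A v"
    and off: "\<forall>v\<in>boundary (V1 \<times> V2) (cart_adj E1 E2) A. k + 2 \<le> Dl (V1 \<times> V2) (cart_adj E1 E2) A v"
    by blast+
  let ?Y = "snd ` A"
  have m0: "0 \<le> maxdeg V1 E1" unfolding maxdeg_def by simp
  have "powerful_alliance V2 E2 k2 ?Y"
    unfolding pa_iff
  proof (intro conjI ballI)
    show "?Y \<noteq> {}" using ne by simp
    show "?Y \<subseteq> V2" using AP by auto
  next
    fix b assume "b \<in> ?Y"
    then have "\<exists>a. (a, b) \<in> A" by (rule ex_row)
    then obtain a where ab: "(a, b) \<in> A" by blast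
    then have a: "a \<in> V1" and b: "b \<in> V2" using AP by auto
    have "k \<le> Dl V1 E1 {x. (x, b) \<in> A} a + Dl V2 E2 {y. (a, y) \<in> A} b"
      using bspec[OF def ab] Dl_cart[OF G1 G2 a b] by simp
    moreover have "Dl V2 E2 {y. (a, y) \<in> A} b \<le> Dl V2 E2 ?Y b"
      by (rule Dl_mono[OF G2 col_sub])
    moreover have "Dl V1 E1 {x. (x, b) \<in> A} a \<le> maxdeg V1 E1"
      using Dl_le[OF G1, of "{x. (x, b) \<in> A}" a] deg_le_max[OF G1 a] by linarith
    ultimately show "k2 \<le> Dl V2 E2 ?Y b" using kk by linarith
  next
    fix b assume "b \<in> boundary V2 E2 ?Y"
    then obtain b' where b: "b \<in> V2" "b \<notin> ?Y" and b': "b' \<in> ?Y" "E2 b' b"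
      unfolding boundary_def by auto
    from b'(1) have "\<exists>a. (a, b') \<in> A" by (rule ex_row)
    then obtain a where ab': "(a, b') \<in> A" by blast
    then have a: "a \<in> V1" using AP by auto
    have "(a, b) \<in> boundary (V1 \<times> V2) (cart_adj E1 E2) A"
    proof -
      have "(a, b) \<notin> A" using b(2) by (metis snd_conv rev_image_eqI)
      moreover have "cart_adj E1 E2 (a, b') (a, b)" unfolding cart_adj_def using b'(2) by simp
      ultimately show ?thesis unfolding boundary_def using a b(1) ab' by blast
    qed
    then have "k + 2 \<le> Dl (V1 \<times> V2) (cart_adj E1 E2) A (a, b)" using off by blast
    then have "k + 2 \<le> Dl V1 E1 {x. (x, b) \<in> A} a + Dl V2 E2 {y. (a, y) \<in> A} b"
      using Dl_cart[OF G1 G2 a b(1), of A] by simp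
    moreover have "{x. (x, b) \<in> A} = {}" using row_empty[OF b(2)] .
    moreover have "Dl V2 E2 {y. (a, y) \<in> A} b \<le> Dl V2 E2 ?Y b"
      by (rule Dl_mono[OF G2 col_sub])
    ultimately show "k2 + 2 \<le> Dl V2 E2 ?Y b" using kk m0 Dl_empty[OF G1, of a] by simp
  qed
  moreover have "?Y \<subseteq> snd ` S" using AS by auto
  ultimately show False using paf unfolding paf_set_def by blast
qed


lemma col_pa:
  assumes G1: "simple_graph V1 E1" and G2: "simple_graph V2 E2"
    and pa: "powerful_alliance (V1 \<times> V2) (cart_adj E1 E2) k A"
    and aX: "a \<in> fst ` A" and low: "Dl V1 E1 (fst ` A) a < k1" and kk: "k1 + k2 - 1 \<le> k"
  shows "powerful_alliance V2 E2 k2 {y. (a, y) \<in> A}"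
proof -
  from pa[unfolded pa_iff] have AP: "A \<subseteq> V1 \<times> V2"
    and def: "\<forall>v\<in>A. k \<le> Dl (V1 \<times> V2) (cart_adj E1 E2) A v"
    and off: "\<forall>v\<in>boundary (V1 \<times> V2) (cart_adj E1 E2) A. k + 2 \<le> Dl (V1 \<times> V2) (cart_adj E1 E2) A v"
    by blast+
  from aX have "\<exists>b. (a, b) \<in> A" by (rule ex_col)
  then obtain b0 where ab0: "(a, b0) \<in> A" by blast
  then have a: "a \<in> V1" using AP by auto
  show ?thesis unfolding pa_iff
  proof (intro conjI ballI)
    show "{y. (a, y) \<in> A} \<noteq> {}" using ab0 by blast
    show "{y. (a, y) \<in> A} \<subseteq> V2" using AP by auto
  next
    fix b assume "b \<in> {y. (a, y) \<in> A}"
    then have ab: "(a, b) \<in> A" by simp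
    then have b: "b \<in> V2" using AP by auto
    have "k \<le> Dl (V1 \<times> V2) (cart_adj E1 E2) A (a, b)" using def ab by blast
    then have "k \<le> Dl V1 E1 {x. (x, b) \<in> A} a + Dl V2 E2 {y. (a, y) \<in> A} b"
      using Dl_cart[OF G1 G2 a b, of A] by simp
    moreover have "Dl V1 E1 {x. (x, b) \<in> A} a \<le> Dl V1 E1 (fst ` A) a"
      by (rule Dl_mono[OF G1 row_sub])
    ultimately show "k2 \<le> Dl V2 E2 {y. (a, y) \<in> A} b" using low kk by linarith
  next
    fix b assume "b \<in> boundary V2 E2 {y. (a, y) \<in> A}"
    then obtain b' where b: "b \<in> V2" "(a, b) \<notin> A" and b': "(a, b') \<in> A" "E2 b' b"
      unfolding boundary_def by auto
    have "cart_adj E1 E2 (a, b') (a, b)" unfolding cart_adj_def using b'(2) by simp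
    then have "(a, b) \<in> boundary (V1 \<times> V2) (cart_adj E1 E2) A"
      unfolding boundary_def using a b b'(1) by blast
    then have "k + 2 \<le> Dl (V1 \<times> V2) (cart_adj E1 E2) A (a, b)" using off by blast
    then have "k + 2 \<le> Dl V1 E1 {x. (x, b) \<in> A} a + Dl V2 E2 {y. (a, y) \<in> A} b"
      using Dl_cart[OF G1 G2 a b(1), of A] by simp
    moreover have "Dl V1 E1 {x. (x, b) \<in> A} a \<le> Dl V1 E1 (fst ` A) a"
      by (rule Dl_mono[OF G1 row_sub])
    ultimately show "k2 + 2 \<le> Dl V2 E2 {y. (a, y) \<in> A} b" using low kk by linarith
  qed
qed

lemma row_pa:
  assumes G1: "simple_graph V1 E1" and G2: "simple_graph V2 E2"
    and pa: "powerful_alliance (V1 \<times> V2) (cart_adj E1 E2) k A"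
    and bY: "b \<in> snd ` A" and low: "Dl V2 E2 (snd ` A) b < k2" and kk: "k1 + k2 - 1 \<le> k"
  shows "powerful_alliance V1 E1 k1 {x. (x, b) \<in> A}"
proof -
  from pa[unfolded pa_iff] have AP: "A \<subseteq> V1 \<times> V2"
    and def: "\<forall>v\<in>A. k \<le> Dl (V1 \<times> V2) (cart_adj E1 E2) A v"
    and off: "\<forall>v\<in>boundary (V1 \<times> V2) (cart_adj E1 E2) A. k + 2 \<le> Dl (V1 \<times> V2) (cart_adj E1 E2) A v"
    by blast+
  from bY have "\<exists>a. (a, b) \<in> A" by (rule ex_row)
  then obtain a0 where a0b: "(a0, b) \<in> A" by blast
  then have b: "b \<in> V2" using AP by auto
  show ?thesis unfolding pa_iff
  proof (intro conjI ballI)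
    show "{x. (x, b) \<in> A} \<noteq> {}" using a0b by blast
    show "{x. (x, b) \<in> A} \<subseteq> V1" using AP by auto
  next
    fix a assume "a \<in> {x. (x, b) \<in> A}"
    then have ab: "(a, b) \<in> A" by simp
    then have a: "a \<in> V1" using AP by auto
    have "k \<le> Dl (V1 \<times> V2) (cart_adj E1 E2) A (a, b)" using def ab by blast
    then have "k \<le> Dl V1 E1 {x. (x, b) \<in> A} a + Dl V2 E2 {y. (a, y) \<in> A} b"
      using Dl_cart[OF G1 G2 a b, of A] by simp
    moreover have "Dl V2 E2 {y. (a, y) \<in> A} b \<le> Dl V2 E2 (snd ` A) b"
      by (rule Dl_mono[OF G2 col_sub])
    ultimately show "k1 \<le> Dl V1 E1 {x. (x, b) \<in> A} a" using low kk by linarith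
  next
    fix a assume "a \<in> boundary V1 E1 {x. (x, b) \<in> A}"
    then obtain a' where a: "a \<in> V1" "(a, b) \<notin> A" and a': "(a', b) \<in> A" "E1 a' a"
      unfolding boundary_def by auto
    have "cart_adj E1 E2 (a', b) (a, b)" unfolding cart_adj_def using a'(2) by simp
    then have "(a, b) \<in> boundary (V1 \<times> V2) (cart_adj E1 E2) A"
      unfolding boundary_def using a b a'(1) by blast
    then have "k + 2 \<le> Dl (V1 \<times> V2) (cart_adj E1 E2) A (a, b)" using off by blast
    then have "k + 2 \<le> Dl V1 E1 {x. (x, b) \<in> A} a + Dl V2 E2 {y. (a, y) \<in> A} b"
      using Dl_cart[OF G1 G2 a(1) b, of A] by simp
    moreover have "Dl V2 E2 {y. (a, y) \<in> A} b \<le> Dl V2 E2 (snd ` A) b"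
      by (rule Dl_mono[OF G2 col_sub])
    ultimately show "k1 + 2 \<le> Dl V1 E1 {x. (x, b) \<in> A} a" using low kk by linarith
  qed
qed

lemma off1:
  assumes G1: "simple_graph V1 E1" and G2: "simple_graph V2 E2"
    and pa: "powerful_alliance (V1 \<times> V2) (cart_adj E1 E2) k A"
    and ab: "a \<in> boundary V1 E1 (fst ` A)" and low: "Dl V1 E1 (fst ` A) a < k1 + 2"
  shows "k \<le> k1 - 1 - mindeg V2 E2"
proof -
  from pa[unfolded pa_iff] have AP: "A \<subseteq> V1 \<times> V2"
    and off: "\<forall>v\<in>boundary (V1 \<times> V2) (cart_adj E1 E2) A. k + 2 \<le> Dl (V1 \<times> V2) (cart_adj E1 E2) A v"
    by blast+
  from ab obtain a' where a: "a \<in> V1" "a \<notin> fst ` A" and a': "a' \<in> fst ` A" "E1 a' a"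
    unfolding boundary_def by auto
  from a'(1) have "\<exists>b. (a', b) \<in> A" by (rule ex_col)
  then obtain b where a'b: "(a', b) \<in> A" by blast
  then have b: "b \<in> V2" using AP by auto
  have "(a, b) \<notin> A" using a(2) by (metis fst_conv rev_image_eqI)
  moreover have "cart_adj E1 E2 (a', b) (a, b)" unfolding cart_adj_def using a'(2) by simp
  ultimately have "(a, b) \<in> boundary (V1 \<times> V2) (cart_adj E1 E2) A"
    unfolding boundary_def using a(1) b a'b by blast
  then have "k + 2 \<le> Dl (V1 \<times> V2) (cart_adj E1 E2) A (a, b)" using off by blast
  then have "k + 2 \<le> Dl V1 E1 {x. (x, b) \<in> A} a + Dl V2 E2 {y. (a, y) \<in> A} b"
    using Dl_cart[OF G1 G2 a(1) b, of A] by simp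
  moreover have "{y. (a, y) \<in> A} = {}" using col_empty[OF a(2)] .
  moreover have "Dl V1 E1 {x. (x, b) \<in> A} a \<le> Dl V1 E1 (fst ` A) a"
    by (rule Dl_mono[OF G1 row_sub])
  moreover have "mindeg V2 E2 \<le> int (degree V2 E2 b)" by (rule min_le_deg[OF G2 b])
  ultimately show ?thesis using low Dl_empty[OF G2, of b] by simp
qed

lemma off2:
  assumes G1: "simple_graph V1 E1" and G2: "simple_graph V2 E2"
    and pa: "powerful_alliance (V1 \<times> V2) (cart_adj E1 E2) k A"
    and bb: "b \<in> boundary V2 E2 (snd ` A)" and low: "Dl V2 E2 (snd ` A) b < k2 + 2"
  shows "k \<le> k2 - 1 - mindeg V1 E1"
proof -
  from pa[unfolded pa_iff] have AP: "A \<subseteq> V1 \<times> V2"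
    and off: "\<forall>v\<in>boundary (V1 \<times> V2) (cart_adj E1 E2) A. k + 2 \<le> Dl (V1 \<times> V2) (cart_adj E1 E2) A v"
    by blast+
  from bb obtain b' where b: "b \<in> V2" "b \<notin> snd ` A" and b': "b' \<in> snd ` A" "E2 b' b"
    unfolding boundary_def by auto
  from b'(1) have "\<exists>a. (a, b') \<in> A" by (rule ex_row)
  then obtain a where ab': "(a, b') \<in> A" by blast
  then have a: "a \<in> V1" using AP by auto
  have "(a, b) \<notin> A" using b(2) by (metis snd_conv rev_image_eqI)
  moreover have "cart_adj E1 E2 (a, b') (a, b)" unfolding cart_adj_def using b'(2) by simp
  ultimately have "(a, b) \<in> boundary (V1 \<times> V2) (cart_adj E1 E2) A"
    unfolding boundary_def using a b(1) ab' by blast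
  then have "k + 2 \<le> Dl (V1 \<times> V2) (cart_adj E1 E2) A (a, b)" using off by blast
  then have "k + 2 \<le> Dl V1 E1 {x. (x, b) \<in> A} a + Dl V2 E2 {y. (a, y) \<in> A} b"
    using Dl_cart[OF G1 G2 a b(1), of A] by simp
  moreover have "{x. (x, b) \<in> A} = {}" using row_empty[OF b(2)] .
  moreover have "Dl V2 E2 {y. (a, y) \<in> A} b \<le> Dl V2 E2 (snd ` A) b"
    by (rule Dl_mono[OF G2 col_sub])
  moreover have "mindeg V1 E1 \<le> int (degree V1 E1 a)" by (rule min_le_deg[OF G1 a])
  ultimately show ?thesis using low Dl_empty[OF G1, of a] by simp
qed

lemma not_pa:
  assumes "\<not> powerful_alliance V E k T" "T \<noteq> {}" "T \<subseteq> V"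
  shows "(\<exists>v\<in>T. Dl V E T v < k) \<or> (\<exists>v\<in>boundary V E T. Dl V E T v < k + 2)"
proof -
  from assms have "\<not> ((\<forall>v\<in>T. k \<le> Dl V E T v) \<and> (\<forall>v\<in>boundary V E T. k + 2 \<le> Dl V E T v))"
    unfolding pa_iff by blast
  then show ?thesis by (auto simp: not_le)
qed

lemma part3:
  assumes G1: "simple_graph V1 E1" and G2: "simple_graph V2 E2"
    and S: "S \<subseteq> V1 \<times> V2"
    and paf1: "paf_set V1 E1 k1 (fst ` S)" and paf2: "paf_set V2 E2 k2 (snd ` S)"
    and kk: "max (k1 + k2 - 1) (min (k2 - mindeg V1 E1) (k1 - mindeg V2 E2)) \<le> k"
  shows "paf_set (V1 \<times> V2) (cart_adj E1 E2) k S"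
  unfolding paf_set_def
proof (intro conjI allI impI notI)
  show "S \<subseteq> V1 \<times> V2" by (rule S)
  fix A assume pa: "powerful_alliance (V1 \<times> V2) (cart_adj E1 E2) k A" and AS: "A \<subseteq> S"
  from pa[unfolded pa_iff] have ne: "A \<noteq> {}" and AP: "A \<subseteq> V1 \<times> V2" by blast+
  have k1: "k1 + k2 - 1 \<le> k" using kk by simp
  have XS: "fst ` A \<subseteq> fst ` S" and YS: "snd ` A \<subseteq> snd ` S" using AS by auto
  have nX: "\<not> powerful_alliance V1 E1 k1 (fst ` A)" using paf1 XS unfolding paf_set_def by blast
  have nY: "\<not> powerful_alliance V2 E2 k2 (snd ` A)" using paf2 YS unfolding paf_set_def by blast
  have cX: "{y. (a, y) \<in> A} \<subseteq> snd ` S" for a by (rule order_trans[OF col_sub YS])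
  have rY: "{x. (x, b) \<in> A} \<subseteq> fst ` S" for b by (rule order_trans[OF row_sub XS])
  have X1: "(\<exists>v\<in>fst ` A. Dl V1 E1 (fst ` A) v < k1) \<or> (\<exists>v\<in>boundary V1 E1 (fst ` A). Dl V1 E1 (fst ` A) v < k1 + 2)"
    by (rule not_pa[OF nX]) (use ne AP in auto)
  have Y1: "(\<exists>v\<in>snd ` A. Dl V2 E2 (snd ` A) v < k2) \<or> (\<exists>v\<in>boundary V2 E2 (snd ` A). Dl V2 E2 (snd ` A) v < k2 + 2)"
    by (rule not_pa[OF nY]) (use ne AP in auto)
  show False
  proof (cases "\<exists>v\<in>fst ` A. Dl V1 E1 (fst ` A) v < k1")
    case True
    then obtain a where aa: "a \<in> fst ` A" and al: "Dl V1 E1 (fst ` A) a < k1" by blast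
    have "powerful_alliance V2 E2 k2 {y. (a, y) \<in> A}" by (rule col_pa[OF G1 G2 pa aa al k1])
    then show False using paf2 cX unfolding paf_set_def by blast
  next
    case F1: False
    show False
    proof (cases "\<exists>v\<in>snd ` A. Dl V2 E2 (snd ` A) v < k2")
      case True
      then obtain b where bb: "b \<in> snd ` A" and bl: "Dl V2 E2 (snd ` A) b < k2" by blast
      have "powerful_alliance V1 E1 k1 {x. (x, b) \<in> A}" by (rule row_pa[OF G1 G2 pa bb bl k1])
      then show False using paf1 rY unfolding paf_set_def by blast
    next
      case False
      then obtain b where "b \<in> boundary V2 E2 (snd ` A)" "Dl V2 E2 (snd ` A) b < k2 + 2"
        using Y1 by blast
      then have 2: "k \<le> k2 - 1 - mindeg V1 E1" by (rule off2[OF G1 G2 pa])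
      obtain a where "a \<in> boundary V1 E1 (fst ` A)" "Dl V1 E1 (fst ` A) a < k1 + 2"
        using X1 F1 by blast
      then have 1: "k \<le> k1 - 1 - mindeg V2 E2" by (rule off1[OF G1 G2 pa])
      have "min (k2 - mindeg V1 E1) (k1 - mindeg V2 E2) \<le> k" using kk by simp
      then show False using 1 2 by linarith
    qed
  qed
qed

theorem theorem5:
  fixes V1 :: "'a set" and E1 :: "'a \<Rightarrow> 'a \<Rightarrow> bool"
    and V2 :: "'b set" and E2 :: "'b \<Rightarrow> 'b \<Rightarrow> bool"
    and S :: "('a \<times> 'b) set"
  assumes G1: "simple_graph V1 E1" and G2: "simple_graph V2 E2"
    and S: "S \<subseteq> V1 \<times> V2"
  shows
    "(\<forall>k1 k. paf_set V1 E1 k1 (fst ` S) \<longrightarrow>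
        k1 + maxdeg V2 E2 \<le> k \<longrightarrow> k \<le> maxdeg V1 E1 + maxdeg V2 E2 - 2 \<longrightarrow>
        paf_set (V1 \<times> V2) (cart_adj E1 E2) k S)
   \<and> (\<forall>k2 k. paf_set V2 E2 k2 (snd ` S) \<longrightarrow>
        k2 + maxdeg V1 E1 \<le> k \<longrightarrow> k \<le> maxdeg V1 E1 + maxdeg V2 E2 - 2 \<longrightarrow>
        paf_set (V1 \<times> V2) (cart_adj E1 E2) k S)
   \<and> (\<forall>k1 k2 k. paf_set V1 E1 k1 (fst ` S) \<longrightarrow> paf_set V2 E2 k2 (snd ` S) \<longrightarrow>
        max (k1 + k2 - 1) (min (k2 - mindeg V1 E1) (k1 - mindeg V2 E2)) \<le> k \<longrightarrow>
        k \<le> maxdeg V1 E1 + maxdeg V2 E2 - 2 \<longrightarrow>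
        paf_set (V1 \<times> V2) (cart_adj E1 E2) k S)"
proof (intro conjI allI impI)
  fix k1 k assume "paf_set V1 E1 k1 (fst ` S)" "k1 + maxdeg V2 E2 \<le> k"
  then show "paf_set (V1 \<times> V2) (cart_adj E1 E2) k S" by (rule part1[OF G1 G2 S])
next
  fix k2 k assume "paf_set V2 E2 k2 (snd ` S)" "k2 + maxdeg V1 E1 \<le> k"
  then show "paf_set (V1 \<times> V2) (cart_adj E1 E2) k S" by (rule part2[OF G1 G2 S])
next
  fix k1 k2 k assume "paf_set V1 E1 k1 (fst ` S)" "paf_set V2 E2 k2 (snd ` S)"
    "max (k1 + k2 - 1) (min (k2 - mindeg V1 E1) (k1 - mindeg V2 E2)) \<le> k"
  then show "paf_set (V1 \<times> V2) (cart_adj E1 E2) k S" by (rule part3[OF G1 G2 S])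
qed

end
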